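(* Let $d\in\mathbb{N}$, $\kappa\in(0,\infty)$, and let $\mathfrak{l}\colon\mathbb{R}^d\times\mathbb{R}^d\to\mathbb{R}$ satisfy $\mathfrak{l}(\theta,\vartheta)=\frac{\kappa}{2}\|\theta-\vartheta\|^2$ for all $\theta,\vartheta\in\mathbb{R}^d$. Let $\gamma\in(0,\kappa^{-1})$, let $(\Omega,\mathcal{F},\mathbb{P})$ be a probability space, let $X_{n,m}\colon\Omega\to\mathbb{R}^d$, $(n,m)\in\mathbb{Z}^2$, be non-degenerate i.i.d. random variables, let $M,\mathfrak{M}\in\mathbb{N}$, and let $\Theta\colon\mathbb{N}_0\times\Omega\to\mathbb{R}^d$ satisfy for all $n\in\mathbb{N}$ $$\Theta_n=\Theta_{n-1}-\frac{\gamma}{M}\Big[\sum_{m=1}^M(\nabla_\theta\mathfrak{l})(\Theta_{n-1},X_{n,m})\Big].$$ Assume $\sup_{n,m\in\mathbb{Z}}\|X_{n,m}(\omega)\|<\infty$ for every $\omega\in\Omega$, that $(X_{n,m})_{(n,m)\in\mathbb{Z}^2}$ and $\Theta_0$ are independent, and let $N\in\mathbb{N}$. Then $$\mathbb{P}\Big(\bigcup_{n=N}^\infty\Big\{\sum_{m=1}^{\mathfrak{M}}\mathfrak{l}(\Theta_n,X_{n,-m})>\sum_{m=1}^{\mathfrak{M}}\mathfrak{l}(\Theta_{n-1},X_{n,-m})\Big\}\Big)=1.$$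
   Context: $\|\cdot\|$ is the Euclidean norm; $\nabla_\theta\mathfrak{l}$ is the gradient in the first argument. For a Borel measure $\mu$ on $\mathbb{R}^d$, $\operatorname{supp}(\mu)=\{x\in\mathbb{R}^d\colon\mu(B)>0\text{ for every open }B\ni x\}$; for a random variable $X$, $\operatorname{supp}(X)=\operatorname{supp}(\mathbb{P}_X)$ with $\mathbb{P}_X$ its law; $X$ is non-degenerate if the interior of $\operatorname{supp}(X)$ is non-empty. *)

theory Defs
  imports "HOL-Probability.Probability"
begin

definition grad1 :: "('a::euclidean_space \<Rightarrow> 'b \<Rightarrow> real) \<Rightarrow> 'a \<Rightarrow> 'b \<Rightarrow> 'a" where
  "grad1 l \<theta> \<phi> = (THE g. ((\<lambda>t. l t \<phi>) has_derivative (\<lambda>h. g \<bullet> h)) (at \<theta>))"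

definition msupp :: "'a::topological_space measure \<Rightarrow> 'a set" where
  "msupp \<mu> = {x. \<forall>B. open B \<longrightarrow> x \<in> B \<longrightarrow> emeasure \<mu> B > 0}"

definition rv_supp :: "'w measure \<Rightarrow> ('w \<Rightarrow> 'a::topological_space) \<Rightarrow> 'a set" where
  "rv_supp P X = msupp (distr P borel X)"

definition non_degenerate :: "'w measure \<Rightarrow> ('w \<Rightarrow> 'a::topological_space) \<Rightarrow> bool" where
  "non_degenerate P X \<longleftrightarrow> interior (rv_supp P X) \<noteq> {}"

end

theory Submission imports Defs begin

lemma grad1_quad:
  fixes l :: "'a::euclidean_space \<Rightarrow> 'a \<Rightarrow> real"
  assumes loss: "\<And>\<theta> \<phi>. l \<theta> \<phi> = \<kappa> / 2 * (norm (\<theta> - \<phi>))\<^sup>2"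
  shows "grad1 l \<theta> \<phi> = \<kappa> *\<^sub>R (\<theta> - \<phi>)"
proof -
  have eq: "(\<lambda>t. l t \<phi>) = (\<lambda>t. \<kappa> / 2 * ((t - \<phi>) \<bullet> (t - \<phi>)))"
    by (simp add: loss power2_norm_eq_inner)
  have d0: "((\<lambda>t. (t - \<phi>) \<bullet> (t - \<phi>)) has_derivative (\<lambda>h. h \<bullet> (\<theta> - \<phi>) + (\<theta> - \<phi>) \<bullet> h)) (at \<theta>)"
    by (auto intro!: derivative_eq_intros)
  have d: "((\<lambda>t. l t \<phi>) has_derivative (\<lambda>h. (\<kappa> *\<^sub>R (\<theta> - \<phi>)) \<bullet> h)) (at \<theta>)"
    unfolding eq
    using has_derivative_mult_right[OF d0, of "\<kappa>/2"]
    by (simp add: inner_commute algebra_simps)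
  show ?thesis
    unfolding grad1_def
  proof (rule the_equality)
    show "((\<lambda>t. l t \<phi>) has_derivative (\<lambda>h. (\<kappa> *\<^sub>R (\<theta> - \<phi>)) \<bullet> h)) (at \<theta>)" by (rule d)
  next
    fix g assume "((\<lambda>t. l t \<phi>) has_derivative (\<lambda>h. g \<bullet> h)) (at \<theta>)"
    from has_derivative_unique[OF this d]
    have "\<And>h. g \<bullet> h = (\<kappa> *\<^sub>R (\<theta> - \<phi>)) \<bullet> h" by metis
    then have "(g - \<kappa> *\<^sub>R (\<theta> - \<phi>)) \<bullet> h = 0" for h
      by (simp add: inner_diff_left)
    from this[of "g - \<kappa> *\<^sub>R (\<theta> - \<phi>)"] show "g = \<kappa> *\<^sub>R (\<theta> - \<phi>)"
      by simp
  qed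
qed

lemma avg_ball:
  fixes x :: "int \<Rightarrow> 'a::real_normed_vector"
  assumes "M \<ge> 1" "\<And>m. m \<in> {1..int M} \<Longrightarrow> x m \<in> ball p d"
  shows "(1 / real M) *\<^sub>R (\<Sum>m = 1..int M. x m) \<in> ball p d"
proof -
  have "(\<Sum>m = 1..int M. (1 / real M) *\<^sub>R x m) \<in> ball p d"
    using assms by (intro convex_sum) auto
  then show ?thesis by (simp add: scaleR_sum_right)
qed

lemma final_step:
  fixes \<theta> Z x a b :: "'a::real_normed_vector"
  assumes c: "0 < c" "c < 1" and d: "\<delta> = c * norm (b - a) / 16"
    and th: "norm (\<theta> - a) \<le> 2 * \<delta>" and Z: "Z \<in> ball b \<delta>" and x: "x \<in> ball a \<delta>"
  shows "norm (((1 - c) *\<^sub>R \<theta> + c *\<^sub>R Z) - x) > norm (\<theta> - x)"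
proof -
  define u where "u = \<theta> - x"
  define v where "v = Z - x"
  have e: "((1 - c) *\<^sub>R \<theta> + c *\<^sub>R Z) - x = (1 - c) *\<^sub>R u + c *\<^sub>R v"
    by (simp add: u_def v_def algebra_simps)
  have nZ: "norm (Z - b) < \<delta>" using Z by (simp add: dist_norm norm_minus_commute)
  have nx: "norm (x - a) < \<delta>" using x by (simp add: dist_norm norm_minus_commute)
  have "norm (b - a) \<le> norm v + norm (Z - b) + norm (x - a)"
  proof -
    have "b - a = v - (Z - b) + (x - a)" by (simp add: v_def algebra_simps)
    then show ?thesis by (metis norm_triangle_ineq norm_triangle_ineq4 add_right_mono order_trans)
  qed
  then have v: "norm v > norm (b - a) - 2 * \<delta>" using nZ nx by linarith
  have u: "norm u < 3 * \<delta>"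
  proof -
    have "u = (\<theta> - a) - (x - a)" by (simp add: u_def)
    then have "norm u \<le> norm (\<theta> - a) + norm (x - a)" by (metis norm_triangle_ineq4)
    then show ?thesis using th nx by linarith
  qed
  have dpos: "\<delta> \<ge> 0" unfolding d using c by simp
  have "c * norm v > c * (norm (b - a) - 2 * \<delta>)" using v c by simp
  also have "c * (norm (b - a) - 2 * \<delta>) = 16 * \<delta> - 2 * c * \<delta>" using d c by (simp add: field_simps)
  finally have cv: "c * norm v > 16 * \<delta> - 2 * c * \<delta>" .
  have "2 * c * \<delta> \<le> 2 * \<delta>" using c dpos mult_right_mono[of c 1 \<delta>] by simp
  have "(2 - c) * norm u \<le> 2 * norm u" using c by (simp add: mult_right_mono)
  have "norm ((1 - c) *\<^sub>R u + c *\<^sub>R v) \<ge> c * norm v - (1 - c) * norm u"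
  proof -
    have "norm (c *\<^sub>R v) \<le> norm ((1 - c) *\<^sub>R u + c *\<^sub>R v) + norm ((1 - c) *\<^sub>R u)"
      by (metis add_diff_cancel_left' norm_triangle_ineq4 add.commute)
    then show ?thesis using c by simp
  qed
  then show ?thesis unfolding e u_def[symmetric]
    using cv u \<open>2 * c * \<delta> \<le> 2 * \<delta>\<close> \<open>(2 - c) * norm u \<le> 2 * norm u\<close> dpos
    by (simp add: algebra_simps)
qed


lemma drive:
  fixes \<theta> Z :: "nat \<Rightarrow> 'a::real_normed_vector"
  assumes step: "\<And>n. \<theta> (Suc n) = (1 - c) *\<^sub>R \<theta> n + c *\<^sub>R Z (Suc n)"
    and c: "0 < c" "c < 1" and R: "norm (\<theta> r - a) \<le> R"
    and Zs: "\<And>t. t < L \<Longrightarrow> Z (Suc r + t) \<in> ball a \<delta>" and dpos: "\<delta> \<ge> 0"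
  shows "t \<le> L \<Longrightarrow> norm (\<theta> (r + t) - a) \<le> (1 - c) ^ t * R + \<delta>"
proof (induction t)
  case 0
  then show ?case using R dpos by simp
next
  case (Suc t)
  then have IH: "norm (\<theta> (r + t) - a) \<le> (1 - c) ^ t * R + \<delta>" by simp
  have Zt: "norm (Z (Suc (r + t)) - a) \<le> \<delta>"
    using Zs[of t] Suc.prems by (simp add: dist_norm norm_minus_commute)
  have "\<theta> (r + Suc t) - a = (1 - c) *\<^sub>R (\<theta> (r + t) - a) + c *\<^sub>R (Z (Suc (r + t)) - a)"
    using step[of "r + t"] by (simp add: algebra_simps)
  then have "norm (\<theta> (r + Suc t) - a) \<le> (1 - c) * norm (\<theta> (r + t) - a) + c * norm (Z (Suc (r + t)) - a)"
    using c by (metis (no_types, opaque_lifting) abs_of_pos diff_gt_0_iff_gt norm_scaleR norm_triangle_ineq abs_of_nonneg less_imp_le)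
  also have "\<dots> \<le> (1 - c) * ((1 - c) ^ t * R + \<delta>) + c * \<delta>"
    using IH Zt c by (intro add_mono mult_left_mono) auto
  also have "\<dots> = (1 - c) ^ Suc t * R + \<delta>" by (simp add: algebra_simps)
  finally show ?case .
qed

lemma (in prob_space) blocks_null:
  fixes X :: "'i \<Rightarrow> 'a \<Rightarrow> 'b::topological_space"
  assumes ind: "indep_vars (\<lambda>_. borel) X UNIV"
    and disj: "disjoint_family J"
    and fin: "\<And>j. finite (J j)"
    and A: "\<And>j i. A j i \<in> sets borel"
    and p: "p > 0" "\<And>j::nat. prob {\<omega>\<in>space M. \<forall>i\<in>J j. X i \<omega> \<in> A j i} \<ge> p"
  shows "prob {\<omega>\<in>space M. \<forall>j. \<not>(\<forall>i\<in>J j. X i \<omega> \<in> A j i)} = 0"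
proof -
  have Xm[measurable]: "X i \<in> borel_measurable M" for i
    using ind by (auto simp: indep_vars_def)
  note A[measurable]
  define F where "F j = {\<omega>\<in>space M. \<forall>i\<in>J j. X i \<omega> \<in> A j i}" for j
  define C where "C j = {\<omega>\<in>space M. \<not>(\<forall>i\<in>J j. X i \<omega> \<in> A j i)}" for j
  have Fm: "F j \<in> events" for j
    unfolding F_def using fin[of j] by measurable
  have CF: "C j = space M - F j" for j unfolding C_def F_def by auto
  let ?W = "\<lambda>j \<omega>. restrict (\<lambda>i. X i \<omega>) (J j)"
  have iv: "indep_vars (\<lambda>j. PiM (J j) (\<lambda>_. borel)) ?W UNIV"
    by (rule indep_vars_restrict[OF ind]) (use disj in auto)
  have ie0: "indep_events (\<lambda>j. {\<omega>\<in>space M. (\<lambda>x. \<not>(\<forall>i\<in>J j. x i \<in> A j i)) (?W j \<omega>)}) UNIV"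
  proof (rule indep_eventsI_indep_vars[OF iv])
    fix j :: nat
    show "{x \<in> space (Pi\<^sub>M (J j) (\<lambda>_. borel)). \<not>(\<forall>i\<in>J j. x i \<in> A j i)} \<in> sets (Pi\<^sub>M (J j) (\<lambda>_. borel))"
      using fin[of j] by measurable
  qed
  have ie: "indep_events C UNIV"
  proof -
    have "(\<lambda>j. {\<omega>\<in>space M. (\<lambda>x. \<not>(\<forall>i\<in>J j. x i \<in> A j i)) (?W j \<omega>)}) = C"
      unfolding C_def by (auto simp: fun_eq_iff)
    then show ?thesis using ie0 by simp
  qed
  have Cm: "C j \<in> events" for j using CF Fm by auto
  have Cp: "prob (C j) \<le> 1 - p" for j
    using CF prob_compl[OF Fm] p(2)[of j] unfolding F_def by simp
  define Cinf where "Cinf = {\<omega>\<in>space M. \<forall>j. \<not>(\<forall>i\<in>J j. X i \<omega> \<in> A j i)}"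
  have Cinfm: "Cinf \<in> events" unfolding Cinf_def using fin by measurable
  have bound: "prob Cinf \<le> (1 - p) ^ k" for k
  proof (cases k)
    case 0 then show ?thesis by simp
  next
    case (Suc k')
    have sub: "Cinf \<subseteq> (\<Inter>j\<in>{..<k}. C j)" unfolding Cinf_def C_def by auto
    have "prob Cinf \<le> prob (\<Inter>j\<in>{..<k}. C j)"
      using sub Suc Cm by (intro finite_measure_mono) auto
    also have "\<dots> = (\<Prod>j\<in>{..<k}. prob (C j))"
      using ie Suc unfolding indep_events_def by (metis finite_lessThan lessThan_empty_iff subset_UNIV nat.distinct(1))
    also have "\<dots> \<le> (\<Prod>j\<in>{..<k}. 1 - p)"
      using Cp by (intro prod_mono) auto
    also have "\<dots> = (1 - p) ^ k" by simp
    finally show ?thesis .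
  qed
  show ?thesis
  proof (rule ccontr)
    assume "prob {\<omega>\<in>space M. \<forall>j. \<not>(\<forall>i\<in>J j. X i \<omega> \<in> A j i)} \<noteq> 0"
    then have pos: "prob Cinf > 0" unfolding Cinf_def using measure_nonneg[of M] by (simp add: less_le)
    obtain k where "(1 - p) ^ k < prob Cinf" using real_arch_pow_inv[OF pos, of "1 - p"] p by auto
    with bound[of k] show False by simp
  qed
qed


lemma blocks_disj_int:
  fixes k1 k2 j j' L N :: int
  assumes "k1 + j * (L + 1) = k2 + j' * (L + 1)" "N \<le> k1" "k1 \<le> N + L" "N \<le> k2" "k2 \<le> N + L" "L \<ge> 0"
  shows "j = j'"
proof (rule ccontr)
  assume ne: "j \<noteq> j'"
  have e: "(j - j') * (L + 1) = k2 - k1" using assms(1) by (simp add: algebra_simps)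
  have "\<bar>j - j'\<bar> \<ge> 1" using ne by auto
  then have "\<bar>j - j'\<bar> * (L + 1) \<ge> 1 * (L + 1)" using assms(6) by (intro mult_right_mono) auto
  then have "\<bar>(j - j') * (L + 1)\<bar> \<ge> L + 1" using assms(6) by (simp add: abs_mult)
  then show False using e assms by linarith
qed

lemma supp_prob_pos:
  assumes "prob_space P" "X \<in> borel_measurable P" "x \<in> rv_supp P X" "\<epsilon> > 0"
  shows "measure P (X -` ball x \<epsilon> \<inter> space P) > 0"
proof -
  interpret prob_space P by fact
  have "emeasure (distr P borel X) (ball x \<epsilon>) > 0"
    using assms(3,4) unfolding rv_supp_def msupp_def by auto
  then have "emeasure P (X -` ball x \<epsilon> \<inter> space P) > 0"
    using assms(2) by (simp add: emeasure_distr)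
  then show ?thesis by (simp add: emeasure_eq_measure)
qed

theorem corollary6p15:
  fixes P :: "'w measure"
    and l :: "'a::euclidean_space \<Rightarrow> 'a \<Rightarrow> real"
    and \<kappa> \<gamma> :: real
    and X :: "int \<times> int \<Rightarrow> 'w \<Rightarrow> 'a"
    and \<Theta> :: "nat \<Rightarrow> 'w \<Rightarrow> 'a"
    and M MM N :: nat
  assumes kappa: "\<kappa> > 0"
    and loss: "\<And>\<theta> \<phi>. l \<theta> \<phi> = \<kappa> / 2 * (norm (\<theta> - \<phi>))\<^sup>2"
    and gamma: "0 < \<gamma>" "\<gamma> < 1 / \<kappa>"
    and prob: "prob_space P"
    and indep: "prob_space.indep_vars P (\<lambda>_. borel) X UNIV"
    and ident: "\<And>i j. distr P borel (X i) = distr P borel (X j)"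
    and nondeg: "\<And>i. non_degenerate P (X i)"
    and M_pos: "M \<ge> 1" and MM_pos: "MM \<ge> 1"
    and rec: "\<And>n \<omega>. n \<ge> 1 \<Longrightarrow>
       \<Theta> n \<omega> = \<Theta> (n - 1) \<omega> - (\<gamma> / real M) *\<^sub>R (\<Sum>m = 1..int M. grad1 l (\<Theta> (n - 1) \<omega>) (X (int n, m) \<omega>))"
    and bdd: "\<And>\<omega>. \<omega> \<in> space P \<Longrightarrow> bdd_above (range (\<lambda>i. norm (X i \<omega>)))"
    and theta0_rv: "\<Theta> 0 \<in> borel_measurable P"
    and indep0: "prob_space.indep_set P
          (sigma_sets (space P) {\<Theta> 0 -` A \<inter> space P | A. A \<in> sets borel})
          (sigma_sets (space P) (\<Union>i. {X i -` A \<inter> space P | A. A \<in> sets borel}))"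
    and N_pos: "N \<ge> 1"
  shows "measure P (\<Union>n\<in>{N..}. {\<omega> \<in> space P.
            (\<Sum>m = 1..int MM. l (\<Theta> n \<omega>) (X (int n, - m) \<omega>))
          > (\<Sum>m = 1..int MM. l (\<Theta> (n - 1) \<omega>) (X (int n, - m) \<omega>))}) = 1"
proof -
  interpret P: prob_space P by (rule prob)
  define c where "c = \<gamma> * \<kappa>"
  have c0: "0 < c" using gamma kappa by (simp add: c_def)
  have c1: "c < 1" using gamma kappa by (simp add: c_def field_simps)
  have Xm[measurable]: "X i \<in> borel_measurable P" for i
    using indep unfolding P.indep_vars_def by (cases i) auto
  define Z where "Z n \<omega> = (1 / real M) *\<^sub>R (\<Sum>m = 1..int M. X (int n, m) \<omega>)" for n \<omega>
  have Zm[measurable]: "Z n \<in> borel_measurable P" for n unfolding Z_def by measurable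
  have step: "\<Theta> (Suc n) \<omega> = (1 - c) *\<^sub>R \<Theta> n \<omega> + c *\<^sub>R Z (Suc n) \<omega>" for n \<omega>
  proof -
    have g: "grad1 l \<theta> \<phi> = \<kappa> *\<^sub>R (\<theta> - \<phi>)" for \<theta> \<phi> by (rule grad1_quad[OF loss])
    have cardM: "card {1..int M} = M" by simp
    have "(\<Sum>m = 1..int M. grad1 l (\<Theta> n \<omega>) (X (int (Suc n), m) \<omega>))
        = \<kappa> *\<^sub>R (real M *\<^sub>R \<Theta> n \<omega> - (\<Sum>m = 1..int M. X (int (Suc n), m) \<omega>))"
      using cardM by (simp add: g sum_subtractf sum_constant_scaleR scaleR_sum_right[symmetric] scaleR_diff_right)
    then have "\<Theta> (Suc n) \<omega> = \<Theta> n \<omega> - (\<gamma> / real M) *\<^sub>R (\<kappa> *\<^sub>R (real M *\<^sub>R \<Theta> n \<omega> - (\<Sum>m = 1..int M. X (int (Suc n), m) \<omega>)))"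
      using rec[of "Suc n" \<omega>] by simp
    also have "\<dots> = \<Theta> n \<omega> - (\<gamma> / real M * \<kappa> * real M) *\<^sub>R \<Theta> n \<omega> + (\<gamma> * \<kappa> / real M) *\<^sub>R (\<Sum>m = 1..int M. X (int (Suc n), m) \<omega>)"
      by (simp add: scaleR_diff_right)
    also have "\<gamma> / real M * \<kappa> * real M = c" using M_pos by (simp add: c_def)
    finally show ?thesis by (simp add: Z_def c_def algebra_simps)
  qed
  have Thm[measurable]: "\<Theta> n \<in> borel_measurable P" for n
  proof (induction n)
    case 0 then show ?case by (rule theta0_rv)
  next
    case (Suc n)
    have "\<Theta> (Suc n) = (\<lambda>\<omega>. (1 - c) *\<^sub>R \<Theta> n \<omega> + c *\<^sub>R Z (Suc n) \<omega>)" by (rule ext, rule step)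
    then show ?case using Suc by simp
  qed
  obtain a where a: "a \<in> interior (rv_supp P (X (0,0)))"
    using nondeg[of "(0,0)"] unfolding non_degenerate_def by auto
  then obtain r where r: "r > 0" "ball a r \<subseteq> rv_supp P (X (0,0))"
    using mem_interior by blast
  define e :: 'a where "e = (SOME i. i \<in> Basis)"
  have ne: "norm e = 1" unfolding e_def by (simp add: SOME_Basis)
  define b where "b = a + (r / 2) *\<^sub>R e"
  have nba: "norm (b - a) = r / 2" using r ne by (simp add: b_def)
  have asupp: "a \<in> rv_supp P (X (0,0))" using r by auto
  have bsupp: "b \<in> rv_supp P (X (0,0))" using r nba by (intro subsetD[OF r(2)]) (simp add: dist_norm norm_minus_commute)
  have same: "P.prob (X i -` B \<inter> space P) = P.prob (X (0,0) -` B \<inter> space P)" if "B \<in> sets borel" for i B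
    using measure_distr[OF Xm[of i] that] measure_distr[OF Xm[of "(0,0)"] that] ident[of i "(0,0)"] by simp
  have qpos: "P.prob (X (0,0) -` ball q \<epsilon> \<inter> space P) > 0" if "q \<in> {a, b}" "\<epsilon> > 0" for q \<epsilon>
    using that supp_prob_pos[OF prob Xm asupp] supp_prob_pos[OF prob Xm bsupp] by auto
  define \<delta> where "\<delta> = c * norm (b - a) / 16"
  have nba0: "norm (b - a) > 0" using nba r(1) by linarith
  have dpos: "\<delta> > 0" unfolding \<delta>_def using c0 nba0 by simp
  define B where "B \<omega> = (SUP i. norm (X i \<omega>))" for \<omega>
  have XB: "norm (X i \<omega>) \<le> B \<omega>" if "\<omega> \<in> space P" for i \<omega>
    unfolding B_def using bdd[OF that] by (intro cSUP_upper) auto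
  have ZB: "norm (Z n \<omega>) \<le> B \<omega>" if "\<omega> \<in> space P" for n \<omega>
  proof -
    have "(\<Sum>m = 1..int M. (1 / real M) *\<^sub>R X (int n, m) \<omega>) \<in> cball 0 (B \<omega>)"
      using XB[OF that] M_pos by (intro convex_sum) auto
    then show ?thesis by (simp add: Z_def scaleR_sum_right)
  qed
  have ThB: "norm (\<Theta> n \<omega>) \<le> max (norm (\<Theta> 0 \<omega>)) (B \<omega>)" if "\<omega> \<in> space P" for n \<omega>
  proof (induction n)
    case 0 then show ?case by simp
  next
    case (Suc n)
    have "norm (\<Theta> (Suc n) \<omega>) \<le> (1 - c) * norm (\<Theta> n \<omega>) + c * norm (Z (Suc n) \<omega>)"
      unfolding step using c0 c1 by (metis (no_types, opaque_lifting) abs_of_pos diff_gt_0_iff_gt norm_scaleR norm_triangle_ineq abs_of_nonneg less_imp_le)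
    also have "\<dots> \<le> (1 - c) * max (norm (\<Theta> 0 \<omega>)) (B \<omega>) + c * max (norm (\<Theta> 0 \<omega>)) (B \<omega>)"
      using Suc.IH ZB[OF that, of "Suc n"] c0 c1 by (intro add_mono mult_left_mono) auto
    also have "\<dots> = max (norm (\<Theta> 0 \<omega>)) (B \<omega>)" by (simp add: algebra_simps)
    finally show ?case .
  qed
  define Lf where "Lf S = (SOME L. (1 - c) ^ L * (real S + norm a) \<le> \<delta>)" for S :: nat
  have Lf: "(1 - c) ^ Lf S * (real S + norm a) \<le> \<delta>" for S
  proof -
    have q: "real S + norm a + 1 > 0" by (simp add: add_nonneg_pos)
    have "\<delta> / (real S + norm a + 1) > 0" using dpos q by (rule divide_pos_pos)
    then obtain L where L: "(1 - c) ^ L < \<delta> / (real S + norm a + 1)"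
      using real_arch_pow_inv[of "\<delta> / (real S + norm a + 1)" "1 - c"] c0 by auto
    have "(1 - c) ^ L * (real S + norm a) \<le> (1 - c) ^ L * (real S + norm a + 1)"
      using c1 by (intro mult_left_mono) auto
    also have "\<dots> < \<delta>" using L q by (simp add: field_simps)
    finally have "(1 - c) ^ L * (real S + norm a) \<le> \<delta>" by simp
    then show ?thesis unfolding Lf_def by (rule someI)
  qed
  define J0 where "J0 L = ({int N..int N + int L} \<times> {1..int M}) \<union> ({int N + int L} \<times> {-int MM..-1})" for L :: nat
  define sh where "sh L j = (\<lambda>(k::int, m::int). (k + int j * (int L + 1), m))" for L j :: nat
  define pt0 where "pt0 L = (\<lambda>(k::int, m::int). if k = int N + int L \<and> m \<ge> 1 then b else a)" for L :: nat
  define AA where "AA L j = (\<lambda>i::int\<times>int. ball (pt0 L (fst i - int j * (int L + 1), snd i)) \<delta>)" for L j :: nat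
  define JJ where "JJ L j = sh L j ` J0 L" for L j :: nat
  define NS where "NS S = {\<omega>\<in>space P. \<forall>j. \<not>(\<forall>i\<in>JJ (Lf S) j. X i \<omega> \<in> AA (Lf S) j i)}" for S
  have AAsh: "AA L j (sh L j i) = ball (pt0 L i) \<delta>" for L j i
    by (cases i) (simp add: AA_def sh_def)
  have finJ: "finite (JJ L j)" for L j unfolding JJ_def J0_def by simp
  have null: "NS S \<in> null_sets P" for S
  proof -
    define L where "L = Lf S"
    have disj: "disjoint_family (JJ L)"
      unfolding disjoint_family_on_def
    proof (intro ballI impI)
      fix j j' :: nat assume "j \<noteq> j'"
      show "JJ L j \<inter> JJ L j' = {}"
      proof (rule ccontr)
        assume "JJ L j \<inter> JJ L j' \<noteq> {}"
        then obtain i1 i2 where i: "i1 \<in> J0 L" "i2 \<in> J0 L" "sh L j i1 = sh L j' i2"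
          unfolding JJ_def by blast
        obtain k1 m1 k2 m2 where "i1 = (k1, m1)" "i2 = (k2, m2)" by (cases i1, cases i2) auto
        with i have "k1 + int j * (int L + 1) = k2 + int j' * (int L + 1)"
          "int N \<le> k1" "k1 \<le> int N + int L" "int N \<le> k2" "k2 \<le> int N + int L"
          unfolding sh_def J0_def by auto
        from blocks_disj_int[OF this] have "int j = int j'" by simp
        with \<open>j \<noteq> j'\<close> show False by simp
      qed
    qed
    have ptab: "pt0 L i \<in> {a, b}" for i by (cases i) (simp add: pt0_def)
    define p where "p = (\<Prod>i\<in>J0 L. P.prob (X (0,0) -` ball (pt0 L i) \<delta> \<inter> space P))"
    have ppos: "p > 0" unfolding p_def using qpos[OF ptab dpos] by (intro prod_pos) auto
    have injsh: "inj_on (sh L j) (J0 L)" for j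
      unfolding inj_on_def sh_def by auto
    have Fp: "P.prob {\<omega>\<in>space P. \<forall>i\<in>JJ L j. X i \<omega> \<in> AA L j i} \<ge> p" for j
    proof -
      have nonempty: "JJ L j \<noteq> {}" unfolding JJ_def J0_def using M_pos by auto
      have "{\<omega>\<in>space P. \<forall>i\<in>JJ L j. X i \<omega> \<in> AA L j i} = (\<Inter>i\<in>JJ L j. X i -` AA L j i \<inter> space P)"
        using nonempty by auto
      also have "P.prob \<dots> = (\<Prod>i\<in>JJ L j. P.prob (X i -` AA L j i \<inter> space P))"
        using finJ nonempty by (intro P.indep_varsD[OF indep]) (auto simp: AA_def)
      also have "\<dots> = (\<Prod>i\<in>J0 L. P.prob (X (sh L j i) -` AA L j (sh L j i) \<inter> space P))"
        unfolding JJ_def by (rule prod.reindex[OF injsh, unfolded comp_def])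
      also have "\<dots> = p" unfolding p_def AAsh
        by (intro prod.cong refl same) auto
      finally show ?thesis by simp
    qed
    have "P.prob (NS S) = 0"
      unfolding NS_def L_def[symmetric]
      by (rule P.blocks_null[OF indep disj finJ _ ppos Fp]) (simp add: AA_def)
    moreover have "NS S \<in> sets P"
      unfolding NS_def using finJ by measurable (simp add: AA_def)
    ultimately show ?thesis by (simp add: P.emeasure_eq_measure null_sets_def)
  qed
  define U where "U = (\<Union>n\<in>{N..}. {\<omega> \<in> space P.
            (\<Sum>m = 1..int MM. l (\<Theta> n \<omega>) (X (int n, - m) \<omega>))
          > (\<Sum>m = 1..int MM. l (\<Theta> (n - 1) \<omega>) (X (int n, - m) \<omega>))})"
  have Um: "U \<in> sets P" unfolding U_def loss by measurable
  have key: "\<omega> \<in> U" if om: "\<omega> \<in> space P" and S: "\<And>n. norm (\<Theta> n \<omega>) \<le> real S"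
    and H: "\<forall>i\<in>JJ L j. X i \<omega> \<in> AA L j i" and LS: "(1 - c) ^ L * (real S + norm a) \<le> \<delta>" for \<omega> S L j
  proof -
    have H': "X (sh L j i) \<omega> \<in> ball (pt0 L i) \<delta>" if "i \<in> J0 L" for i
      using H that AAsh unfolding JJ_def by auto
    define r where "r = N - 1 + j * (L + 1)"
    have idx: "int (Suc r + t) = int N + int t + int j * (int L + 1)" for t
      using N_pos unfolding r_def by (simp add: algebra_simps)
    have Zs: "Z (Suc r + t) \<omega> \<in> ball a \<delta>" if "t < L" for t
      unfolding Z_def
    proof (rule avg_ball[OF M_pos])
      fix m assume m: "m \<in> {1..int M}"
      have "(int N + int t, m) \<in> J0 L" using m that unfolding J0_def by auto
      from H'[OF this] show "X (int (Suc r + t), m) \<omega> \<in> ball a \<delta>"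
        using that unfolding idx sh_def pt0_def by simp
    qed
    have ZL: "Z (Suc r + L) \<omega> \<in> ball b \<delta>"
      unfolding Z_def
    proof (rule avg_ball[OF M_pos])
      fix m assume m: "m \<in> {1..int M}"
      have "(int N + int L, m) \<in> J0 L" using m unfolding J0_def by auto
      from H'[OF this] show "X (int (Suc r + L), m) \<omega> \<in> ball b \<delta>"
        using m unfolding idx sh_def pt0_def by simp
    qed
    have xs: "X (int (Suc r + L), - m) \<omega> \<in> ball a \<delta>" if m: "m \<in> {1..int MM}" for m
    proof -
      have "(int N + int L, - m) \<in> J0 L" using m unfolding J0_def by auto
      from H'[OF this] show ?thesis
        using m unfolding idx sh_def pt0_def by simp
    qed
    have R: "norm (\<Theta> r \<omega> - a) \<le> real S + norm a"
      using S[of r] norm_triangle_ineq4[of "\<Theta> r \<omega>" a] by linarith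
    have dr: "norm (\<Theta> (r + L) \<omega> - a) \<le> (1 - c) ^ L * (real S + norm a) + \<delta>"
      by (rule drive[where Z="\<lambda>n. Z n \<omega>" and \<theta>="\<lambda>n. \<Theta> n \<omega>", OF step c0 c1 R Zs]) (use dpos in auto)
    have th2: "norm (\<Theta> (r + L) \<omega> - a) \<le> 2 * \<delta>" using dr LS by linarith
    have cmp: "norm (\<Theta> (Suc r + L) \<omega> - X (int (Suc r + L), - m) \<omega>) > norm (\<Theta> (r + L) \<omega> - X (int (Suc r + L), - m) \<omega>)"
      if m: "m \<in> {1..int MM}" for m
      using final_step[OF c0 c1 \<delta>_def th2 ZL xs[OF m]] step[of "r + L" \<omega>] by simp
    have lt: "(\<Sum>m = 1..int MM. l (\<Theta> (r + L) \<omega>) (X (int (Suc r + L), - m) \<omega>))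
        < (\<Sum>m = 1..int MM. l (\<Theta> (Suc r + L) \<omega>) (X (int (Suc r + L), - m) \<omega>))"
    proof (rule sum_strict_mono)
      show "finite {1..int MM}" by simp
      show "{1..int MM} \<noteq> {}" using MM_pos by simp
      fix m assume m: "m \<in> {1..int MM}"
      show "l (\<Theta> (r + L) \<omega>) (X (int (Suc r + L), - m) \<omega>) < l (\<Theta> (Suc r + L) \<omega>) (X (int (Suc r + L), - m) \<omega>)"
        unfolding loss using cmp[OF m] kappa by (simp add: power_strict_mono)
    qed
    have inN: "Suc r + L \<in> {N..}" unfolding r_def using N_pos by simp
    have "Suc r + L - 1 = r + L" by simp
    then show ?thesis unfolding U_def using om lt by (intro UN_I[OF inN]) simp
  qed
  have AE: "AE \<omega> in P. \<omega> \<in> U"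
  proof (rule AE_I')
    show "(\<Union>S. NS S) \<in> null_sets P" using null by auto
    show "{\<omega> \<in> space P. \<omega> \<notin> U} \<subseteq> (\<Union>S. NS S)"
    proof safe
      fix \<omega> assume om: "\<omega> \<in> space P" "\<omega> \<notin> U"
      define S where "S = nat \<lceil>max (norm (\<Theta> 0 \<omega>)) (B \<omega>)\<rceil>"
      have Sb: "norm (\<Theta> n \<omega>) \<le> real S" for n
        using ThB[OF om(1), of n] unfolding S_def by linarith
      have "\<omega> \<in> NS S"
        unfolding NS_def using om key[OF om(1) Sb _ Lf] by blast
      then show "\<omega> \<in> (\<Union>S. NS S)" by blast
    qed
  qed
  show ?thesis using P.prob_eq_1[OF Um] AE unfolding U_def by simp
qed
end
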